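(* Let $\mathcal{H}$ be a real Hilbert space, let $A\colon\mathcal{H}\rightrightarrows\mathcal{H}$ be maximally monotone and let $B\colon \mathcal{H}\to\mathcal{H}$ be locally Lipschitz. Let $\delta\in(0,1)$, $\sigma\in(0,1)$, $\rho\in\{1,\sigma^{-1}\}$, $\lambda_{k-1}>0$ and $x_k,x_{k-1}\in\mathcal{H}$. For $\lambda>0$ put $x_{k+1}(\lambda):=J_{\lambda A}\bigl(x_k - \lambda B(x_k) - \lambda_{k-1}(B(x_k)-B(x_{k-1}))\bigr)$. Then there exists a nonnegative integer $i$ such that, with $\lambda=\rho\lambda_{k-1}\sigma^i$, $$\lambda\|B(x_{k+1}(\lambda))-B(x_k)\|\leq\frac{\delta}{2}\|x_{k+1}(\lambda)-x_k\|.$$ In particular, the linesearch procedure (choosing the smallest such $i$ at each iteration, starting from $\lambda_{-1}>0$ and $x_0,x_{-1}\in\mathcal{H}$) always terminates, so the stepsize sequence $(\lambda_k)$ is well defined.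
   Context: $J_{\lambda A}:=(I+\lambda A)^{-1}$ denotes the resolvent. *)

theory Defs
  imports "HOL-Analysis.Analysis"
begin

definition monotone_op :: "('a::real_inner \<Rightarrow> 'a set) \<Rightarrow> bool" where
  "monotone_op A \<longleftrightarrow>
     (\<forall>x y u v. u \<in> A x \<longrightarrow> v \<in> A y \<longrightarrow> inner (x - y) (u - v) \<ge> 0)"

definition maximally_monotone :: "('a::real_inner \<Rightarrow> 'a set) \<Rightarrow> bool" where
  "maximally_monotone A \<longleftrightarrow> monotone_op A \<and>
     (\<forall>A'. monotone_op A' \<and> (\<forall>x. A x \<subseteq> A' x) \<longrightarrow> A' = A)"

text \<open>Resolvent J_{lam A} = (I + lam A)^{-1}: the point p with z \<in> p + lam A p
  (single-valued and everywhere defined for maximally monotone A and lam > 0).\<close>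
definition resolvent :: "real \<Rightarrow> ('a::real_inner \<Rightarrow> 'a set) \<Rightarrow> 'a \<Rightarrow> 'a" where
  "resolvent lam A z = (THE p. \<exists>u \<in> A p. z = p + lam *\<^sub>R u)"

definition locally_lipschitz :: "('a::metric_space \<Rightarrow> 'b::metric_space) \<Rightarrow> bool" where
  "locally_lipschitz B \<longleftrightarrow>
     (\<forall>x. \<exists>e>0. \<exists>L. \<forall>y\<in>ball x e. \<forall>z\<in>ball x e. dist (B y) (B z) \<le> L * dist y z)"

end

theory Submission
  imports Defs
begin

lemma lin1: "(0::real) \<le> a + 2*b + c \<Longrightarrow> b \<le> F \<Longrightarrow> 0 \<le> F + (a+c)/2" unfolding add_divide_distrib by linarith

lemma lin2: "(m::real) \<le> R + N/2 \<Longrightarrow> N = np/2 + nq/2 - d/4 \<Longrightarrow> R \<le> Fp + 1/2 * (Fq - Fp)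
  \<Longrightarrow> d \<le> 4 * (Fp + np/2 + (Fq + nq/2) - 2*m)" by (simp add: field_simps)

lemma lin3: "H0 \<le> R + N/2 \<Longrightarrow> H0 = Fp + np/2 \<Longrightarrow> N = np + 2*t*i + t^2*d \<Longrightarrow> R \<le> Fp + t * (Fq - Fp)
  \<Longrightarrow> t * (Fp::real) \<le> t * (Fq + i + t / 2 * d)" by (simp add: field_simps power2_eq_square)

lemma minty0:
  fixes G :: "('a::{real_inner,complete_space} \<times> 'a) set"
  assumes mono: "\<And>a v b w. (a,v) \<in> G \<Longrightarrow> (b,w) \<in> G \<Longrightarrow> inner (a-b) (v-w) \<ge> 0"
    and maxi: "\<And>x u. (\<And>a v. (a,v) \<in> G \<Longrightarrow> inner (x-a) (u-v) \<ge> 0) \<Longrightarrow> (x,u) \<in> G"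
  shows "\<exists>x u. (x,u) \<in> G \<and> x + u = 0"
proof -
  have Gne: "G \<noteq> {}" using maxi[of 0 0] by auto
  define phi :: "'a \<times> 'a \<Rightarrow> 'a \<times> 'a \<Rightarrow> real" where
    "phi g p = inner (fst p) (snd g) + inner (fst g) (snd p) - inner (fst g) (snd g)" for g p
  define D where "D = {p. bdd_above ((\<lambda>g. phi g p) ` G)}"
  define F where "F p = (SUP g\<in>G. phi g p)" for p
  have Fupper: "phi g p \<le> F p" if "p \<in> D" "g \<in> G" for g p
    using that unfolding F_def D_def by (auto intro: cSUP_upper)
  have Fleast: "F p \<le> M" if "\<And>g. g \<in> G \<Longrightarrow> phi g p \<le> M" for p M
    unfolding F_def using Gne that by (auto intro: cSUP_least)
  have DI: "p \<in> D" if "\<And>g. g \<in> G \<Longrightarrow> phi g p \<le> M" for p M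
    unfolding D_def by (rule CollectI, rule bdd_aboveI2[where M=M], rule that)
  have graph: "q \<in> D \<and> F q = inner (fst q) (snd q)" if "q \<in> G" for q
  proof -
    obtain a v where q: "q = (a,v)" by force
    have le: "phi g q \<le> inner a v" if "g \<in> G" for g
    proof -
      obtain b w where g: "g = (b,w)" by force
      have "inner (a-b) (v-w) \<ge> 0" using mono[of a v b w] q g that \<open>q \<in> G\<close> by auto
      then show ?thesis unfolding phi_def g q
        by (simp add: inner_diff_left inner_diff_right inner_commute)
    qed
    have D: "q \<in> D" using DI le by blast
    have "F q \<le> inner a v" using Fleast le by blast
    moreover have "phi q q \<le> F q" using Fupper D that by blast
    moreover have "phi q q = inner a v" unfolding phi_def q by (simp add: inner_commute)
    ultimately show ?thesis using D q by simp
  qed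
  have Fge: "F p \<ge> inner (fst p) (snd p)" if "p \<in> D" for p
  proof (rule ccontr)
    assume neg: "\<not> F p \<ge> inner (fst p) (snd p)"
    obtain x u where p: "p = (x,u)" by force
    have "(x,u) \<in> G"
    proof (rule maxi)
      fix a v assume av: "(a,v) \<in> G"
      have "phi (a,v) p \<le> F p" using Fupper that av by blast
      then show "inner (x-a) (u-v) \<ge> 0" using neg unfolding phi_def p
        by (simp add: inner_diff_left inner_diff_right inner_commute)
    qed
    then have "F p = inner x u" using graph p by simp
    then show False using neg p by simp
  qed
  have phi_aff: "phi g (p + t *\<^sub>R (q - p)) = phi g p + t * (phi g q - phi g p)" for g p q t
    unfolding phi_def by (simp add: algebra_simps)
  have conv: "p + t *\<^sub>R (q - p) \<in> D \<and> F (p + t *\<^sub>R (q - p)) \<le> F p + t * (F q - F p)"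
    if "p \<in> D" "q \<in> D" "0 \<le> t" "t \<le> 1" for p q t
  proof -
    have "phi g (p + t *\<^sub>R (q - p)) \<le> F p + t * (F q - F p)" if "g \<in> G" for g
    proof -
      have "phi g p \<le> F p" "phi g q \<le> F q" using Fupper that \<open>p\<in>D\<close> \<open>q\<in>D\<close> by auto
      then have "(1-t) * phi g p + t * phi g q \<le> (1-t) * F p + t * F q"
        using \<open>0\<le>t\<close> \<open>t\<le>1\<close> by (intro add_mono mult_left_mono) auto
      then show ?thesis unfolding phi_aff[of g p t q] by (simp add: algebra_simps)
    qed
    then show ?thesis using DI Fleast by blast
  qed
  have nsq: "(norm p)^2 = inner p p" for p :: "'a \<times> 'a" by (simp add: power2_norm_eq_inner)
  define H where "H p = F p + (norm p)^2 / 2" for p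
  have Hge: "H p \<ge> 0" if "p \<in> D" for p
  proof -
    obtain x u where p: "p = (x,u)" by force
    have "0 \<le> inner (x+u) (x+u)" by simp
    then have "0 \<le> inner x x + 2 * inner x u + inner u u"
      by (simp add: inner_add_left inner_add_right inner_commute)
    moreover have "F p \<ge> inner x u" using Fge[OF that] p by simp
    ultimately have "0 \<le> F (x,u) + (inner x x + inner u u) / 2" 
      using p by (intro lin1) auto
    then show ?thesis unfolding H_def nsq p inner_Pair .
  qed
  define m where "m = Inf (H ` D)"
  have Dne: "D \<noteq> {}" using graph Gne by blast
  have bdd: "bdd_below (H ` D)" using Hge by (intro bdd_belowI2[where m=0]) auto
  have m_le: "m \<le> H p" if "p \<in> D" for p unfolding m_def by (rule cInf_lower[OF imageI[OF that] bdd])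
  have "\<exists>p\<in>D. H p < m + 1 / real (Suc n)" for n
  proof -
    have "\<exists>y\<in>H ` D. y < m + 1 / real (Suc n)"
      using Dne by (intro cInf_lessD) (auto simp: m_def)
    then show ?thesis by auto
  qed
  then obtain P where PD: "\<And>n. P n \<in> D" and PH: "\<And>n. H (P n) < m + 1 / real (Suc n)"
    by metis
  have mid: "(norm (p - q))^2 \<le> 4 * (H p + H q - 2*m)" if "p \<in> D" "q \<in> D" for p q
  proof -
    let ?r = "p + (1/2) *\<^sub>R (q - p)"
    have c: "?r \<in> D" "F ?r \<le> F p + 1/2 * (F q - F p)" using conv[OF that, of "1/2"] by auto
    have "m \<le> H ?r" using m_le c by blast
    moreover have "(norm ?r)^2 = (norm p)^2/2 + (norm q)^2/2 - (norm (p-q))^2/4"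
      unfolding nsq by (simp add: algebra_simps inner_commute field_simps)
    ultimately show ?thesis using c unfolding H_def by (intro lin2)
  qed
  have "Cauchy P"
  proof (rule metric_CauchyI)
    fix e :: real assume "e > 0"
    obtain N :: nat where N: "8 / e^2 < real N" using reals_Archimedean2 by blast
    have "dist (P n) (P k) < e" if "n \<ge> N" "k \<ge> N" for n k
    proof -
      have "(norm (P n - P k))^2 \<le> 4 * (H (P n) + H (P k) - 2*m)" using mid PD by blast
      also have "\<dots> < 4 * (1 / real (Suc n) + 1 / real (Suc k))" using PH[of n] PH[of k] by simp
      also have "\<dots> \<le> 4 * (1 / real (Suc N) + 1 / real (Suc N))"
        using that by (intro mult_left_mono add_mono divide_left_mono) auto
      also have "\<dots> = 8 / real (Suc N)" by simp
      also have "\<dots> < e^2"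
      proof -
        have "8 / e^2 < real (Suc N)" using N by simp
        then show ?thesis using \<open>e>0\<close> by (simp add: field_simps)
      qed
      finally have "(norm (P n - P k))^2 < e^2" .
      then show ?thesis using \<open>e>0\<close> by (simp add: dist_norm power_less_imp_less_base)
    qed
    then show "\<exists>M. \<forall>n\<ge>M. \<forall>k\<ge>M. dist (P n) (P k) < e" by blast
  qed
  then obtain p0 where Plim: "P \<longlonglongrightarrow> p0" using Cauchy_convergent_iff convergent_def by blast
  have inv0: "(\<lambda>n. m + 1 / real (Suc n)) \<longlonglongrightarrow> m"
    using tendsto_add[OF tendsto_const LIMSEQ_Suc[OF lim_1_over_n]] by simp
  have limg: "phi g p0 + (norm p0)^2/2 \<le> m" if "g \<in> G" for g
  proof (rule LIMSEQ_le[OF _ inv0])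
    show "(\<lambda>n. phi g (P n) + (norm (P n))^2/2) \<longlonglongrightarrow> phi g p0 + (norm p0)^2/2"
      unfolding phi_def by (intro tendsto_intros Plim; simp)
    have "phi g (P n) + (norm (P n))^2/2 \<le> m + 1 / real (Suc n)" for n
      using Fupper[OF PD that, of n] PH[of n] unfolding H_def by simp
    then show "\<exists>N. \<forall>n\<ge>N. phi g (P n) + (norm (P n))^2/2 \<le> m + 1 / real (Suc n)" by blast
  qed
  have p0D: "p0 \<in> D" using limg by (intro DI[where M="m - (norm p0)^2/2"]) (simp add: field_simps)
  have "F p0 \<le> m - (norm p0)^2/2" using limg by (intro Fleast) (simp add: field_simps)
  then have Hp0: "H p0 \<le> m" unfolding H_def by simp
  have var: "F p0 \<le> F q + inner p0 (q - p0)" if "q \<in> D" for q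
  proof -
    have step: "F p0 \<le> F q + inner p0 (q - p0) + t / 2 * (norm (q - p0))^2" if "0 < t" "t \<le> 1" for t
    proof -
      let ?r = "p0 + t *\<^sub>R (q - p0)"
      have c: "?r \<in> D" "F ?r \<le> F p0 + t * (F q - F p0)" using conv[OF p0D \<open>q\<in>D\<close>, of t] that by auto
      have "H p0 \<le> H ?r" using m_le c Hp0 by fastforce
      moreover have "(norm ?r)^2 = (norm p0)^2 + 2 * t * inner p0 (q - p0) + t^2 * (norm (q - p0))^2"
        unfolding nsq by (simp add: algebra_simps inner_commute power2_eq_square)
      ultimately have "t * F p0 \<le> t * (F q + inner p0 (q - p0) + t / 2 * (norm (q - p0))^2)"
        using c unfolding H_def by (intro lin3; simp)
      then show ?thesis using that by simp
    qed
    have lim2: "(\<lambda>n. F q + inner p0 (q - p0) + (1 / real (Suc n)) / 2 * (norm (q - p0))^2)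
        \<longlonglongrightarrow> F q + inner p0 (q - p0) + 0 / 2 * (norm (q - p0))^2"
      by (intro tendsto_intros LIMSEQ_Suc[OF lim_1_over_n]; simp)
    have "F p0 \<le> F q + inner p0 (q - p0) + (1 / real (Suc n)) / 2 * (norm (q - p0))^2" for n
      using step[of "1 / real (Suc n)"] by simp
    then show ?thesis
      using LIMSEQ_le[OF tendsto_const lim2] by simp
  qed
  obtain x0 u0 where p0: "p0 = (x0, u0)" by force
  have Fp0: "inner x0 u0 \<le> F p0" using Fge[OF p0D] p0 by simp
  have sq: "0 \<le> inner x0 x0 + 2 * inner x0 u0 + inner u0 u0"
  proof -
    have "0 \<le> inner (x0+u0) (x0+u0)" by simp
    then show ?thesis by (simp add: inner_add_left inner_add_right inner_commute)
  qed
  have inG: "(-u0, -x0) \<in> G"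
  proof (rule maxi)
    fix a v assume av: "(a,v) \<in> G"
    have "F p0 \<le> F (a,v) + inner p0 ((a,v) - p0)" using var graph[OF av] by blast
    also have "\<dots> = inner a v + inner x0 a - inner x0 x0 + inner u0 v - inner u0 u0"
      using graph[OF av] p0 by (simp add: inner_diff_right)
    finally have h: "F p0 \<le> inner a v + inner x0 a - inner x0 x0 + inner u0 v - inner u0 u0" .
    have e: "inner (- u0 - a) (- x0 - v) = inner x0 u0 + inner u0 v + inner x0 a + inner a v"
      by (simp add: inner_diff_left inner_diff_right inner_commute)
    show "0 \<le> inner (- u0 - a) (- x0 - v)" unfolding e using h Fp0 sq by linarith
  qed
  have "F p0 \<le> F (-u0, -x0) + inner p0 ((-u0, -x0) - p0)" using var graph[OF inG] by blast
  also have "\<dots> = - inner x0 u0 - inner x0 x0 - inner u0 u0"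
    using graph[OF inG] p0 by (simp add: inner_diff_right inner_commute)
  finally have "inner x0 x0 + 2 * inner x0 u0 + inner u0 u0 \<le> 0" using Fp0 by linarith
  then have "inner (x0+u0) (x0+u0) \<le> 0" by (simp add: inner_add_left inner_add_right inner_commute)
  then have "x0 + u0 = 0" using inner_ge_zero[of "x0+u0"] inner_eq_zero_iff[of "x0+u0"] by linarith
  then have "x0 = -u0" "u0 = -x0" using add_eq_0_iff2[of x0 u0] add_eq_0_iff[of x0 u0] by blast+
  then have "(x0, u0) \<in> G" using inG by simp
  then show ?thesis using \<open>x0 + u0 = 0\<close> by blast
qed


lemma resolvent_char:
  fixes A :: "'a::{real_inner,complete_space} \<Rightarrow> 'a set"
  assumes mm: "maximally_monotone A" and lam: "lam > 0"
  shows "\<exists>u\<in>A (resolvent lam A z). z = resolvent lam A z + lam *\<^sub>R u"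
proof -
  have mono: "inner (x - y) (u - v) \<ge> 0" if "u \<in> A x" "v \<in> A y" for x y u v
    using mm[unfolded maximally_monotone_def, THEN conjunct1, unfolded monotone_op_def, rule_format, OF that] .
  define G where "G = {(a, lam *\<^sub>R v - z) | a v. v \<in> A a}"
  have "\<exists>x u. (x,u) \<in> G \<and> x + u = 0"
  proof (rule minty0)
    fix a v b w assume "(a,v) \<in> G" "(b,w) \<in> G"
    then obtain v' w' where v': "v' \<in> A a" "v = lam *\<^sub>R v' - z" and w': "w' \<in> A b" "w = lam *\<^sub>R w' - z"
      unfolding G_def by blast
    have "v - w = lam *\<^sub>R (v' - w')" unfolding v'(2) w'(2) by (simp add: scaleR_diff_right)
    then show "inner (a-b) (v-w) \<ge> 0" using mono[OF v'(1) w'(1)] lam by simp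
  next
    fix x u assume rel: "\<And>a v. (a,v) \<in> G \<Longrightarrow> inner (x-a) (u-v) \<ge> 0"
    define w where "w = (1/lam) *\<^sub>R (u + z)"
    have relw: "inner (x - a) (w - v) \<ge> 0" if "v \<in> A a" for a v
    proof -
      have "(a, lam *\<^sub>R v - z) \<in> G" using that unfolding G_def by blast
      then have "inner (x-a) (u - (lam *\<^sub>R v - z)) \<ge> 0" by (rule rel)
      moreover have "u - (lam *\<^sub>R v - z) = lam *\<^sub>R (w - v)" unfolding w_def using lam
        by (simp add: algebra_simps)
      ultimately show ?thesis using lam by (simp add: zero_le_mult_iff)
    qed
    define A' where "A' y = (if y = x then insert w (A x) else A y)" for y
    have "monotone_op A'"
      unfolding monotone_op_def
    proof (intro allI impI)
      fix y1 y2 u1 u2 assume u1: "u1 \<in> A' y1" and u2: "u2 \<in> A' y2"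
      show "inner (y1 - y2) (u1 - u2) \<ge> 0"
      proof (cases "y1 = x \<and> u1 = w")
        case True
        then show ?thesis
        proof (cases "y2 = x \<and> u2 = w")
          case True
          then show ?thesis using \<open>y1 = x \<and> u1 = w\<close> by simp
        next
          case False
          then have "u2 \<in> A y2" using u2 unfolding A'_def by (auto split: if_splits)
          then show ?thesis using relw True by blast
        qed
      next
        case False
        then have u1A: "u1 \<in> A y1" using u1 unfolding A'_def by (auto split: if_splits)
        show ?thesis
        proof (cases "y2 = x \<and> u2 = w")
          case True
          have "inner (x - y1) (w - u1) \<ge> 0" using relw u1A by blast
          moreover have "inner (y1 - y2) (u1 - u2) = inner (x - y1) (w - u1)"
            using True by (simp add: inner_diff_left inner_diff_right)
          ultimately show ?thesis by simp
        next
          case False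
          then have "u2 \<in> A y2" using u2 unfolding A'_def by (auto split: if_splits)
          then show ?thesis using mono u1A by blast
        qed
      qed
    qed
    moreover have "\<forall>y. A y \<subseteq> A' y" unfolding A'_def by auto
    ultimately have "A' = A" using mm[unfolded maximally_monotone_def, THEN conjunct2, rule_format, of A'] by blast
    have "w \<in> A' x" unfolding A'_def by simp
    then have "w \<in> A x" using \<open>A' = A\<close> by simp
    moreover have "u = lam *\<^sub>R w - z" unfolding w_def using lam by simp
    ultimately show "(x,u) \<in> G" unfolding G_def by blast
  qed
  then obtain x v where xv: "v \<in> A x" "x + (lam *\<^sub>R v - z) = 0" unfolding G_def by blast
  have "(x + lam *\<^sub>R v) - z = 0" using xv(2) by (simp only: add_diff_eq)
  then have "z = x + lam *\<^sub>R v" by simp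
  then have ex: "\<exists>u\<in>A x. z = x + lam *\<^sub>R u" using xv(1) by blast
  have uniq: "p = x" if h: "\<exists>u\<in>A p. z = p + lam *\<^sub>R u" for p
  proof -
    obtain u where u: "u \<in> A p" "z = p + lam *\<^sub>R u" using h by blast
    obtain u' where u': "u' \<in> A x" "z = x + lam *\<^sub>R u'" using ex by blast
    have "lam *\<^sub>R (u - u') = x - p" using u u' by (simp add: algebra_simps)
    then have "(1/lam) *\<^sub>R (lam *\<^sub>R (u - u')) = (1/lam) *\<^sub>R (x - p)" by simp
    then have "u - u' = (1/lam) *\<^sub>R (x - p)" using lam by simp
    then have "inner (p - x) ((1/lam) *\<^sub>R (x - p)) \<ge> 0" using mono[OF u(1) u'(1)] by simp
    then have "(1/lam) * inner (p - x) (x - p) \<ge> 0" by simp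
    then have "inner (p - x) (x - p) \<ge> 0" using lam by (simp add: zero_le_divide_iff)
    then have "inner (p - x) (p - x) \<le> 0" using inner_minus_right[of "p - x" "p - x"] by simp
    then have "inner (p - x) (p - x) = 0" using inner_ge_zero[of "p - x"] by linarith
    then show ?thesis by simp
  qed
  have "resolvent lam A z = x"
    unfolding resolvent_def
    by (rule the_equality[where P="\<lambda>p. \<exists>u\<in>A p. z = p + lam *\<^sub>R u", OF ex uniq])
  then show ?thesis using ex by simp
qed


lemma diff_ge: "(y::real) - x = 2 * q \<Longrightarrow> 0 \<le> q \<Longrightarrow> x \<le> y" by linarith

lemma key_real:
  fixes l mu a c s :: real
  assumes "0 < mu" "mu \<le> l" "0 \<le> mu * s - l * c - mu * a + l * s"
    and "0 \<le> a + c - 2 * s" and "a + c - 2 * s = 0 \<Longrightarrow> a = c"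
  shows "a + c - 2 * s \<le> a - c"
proof -
  have e: "(l - mu) * (a - c) - (l + mu) * (a + c - 2 * s) = 2 * (mu * s - l * c - mu * a + l * s)"
    by (simp add: algebra_simps)
  have le: "(l + mu) * (a + c - 2 * s) \<le> (l - mu) * (a - c)" by (rule diff_ge[OF e assms(3)])
  show ?thesis
  proof (cases "c \<le> a")
    case True
    have "(l - mu) * (a - c) \<le> (l + mu) * (a - c)" using True assms(1) by (intro mult_right_mono) auto
    then have "(l + mu) * (a + c - 2 * s) \<le> (l + mu) * (a - c)" using le by linarith
    then show ?thesis using assms(1,2) by (simp add: mult_le_cancel_left_pos)
  next
    case False
    have "(l - mu) * (a - c) \<le> 0" using False assms(2) by (intro mult_nonneg_nonpos) auto
    then have "(l + mu) * (a + c - 2 * s) \<le> 0" using le by linarith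
    then have "a + c - 2 * s \<le> 0" using assms(1,2) by (simp add: mult_le_0_iff)
    then have "a = c" using assms(4,5) by linarith
    then show ?thesis using False by simp
  qed
qed

lemma key_ineq:
  fixes wl wm :: "'a::real_inner"
  assumes "0 < mu" "mu \<le> l" "0 \<le> inner (wm - wl) ((1/l) *\<^sub>R wl - (1/mu) *\<^sub>R wm)"
  shows "(norm (wl - wm))^2 \<le> (norm wl)^2 - (norm wm)^2"
proof -
  define a where "a = inner wl wl"
  define c where "c = inner wm wm"
  define s where "s = inner wl wm"
  have l0: "0 < l" using assms by linarith
  have "inner (wm - wl) ((1/l) *\<^sub>R wl - (1/mu) *\<^sub>R wm) = s / l - c / mu - a / l + s / mu"
    unfolding a_def c_def s_def
    by (simp add: inner_diff_left inner_diff_right inner_commute diff_divide_distrib algebra_simps)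
  then have h: "0 \<le> s / l - c / mu - a / l + s / mu" using assms(3) by simp
  have "0 \<le> (l * mu) * (s / l - c / mu - a / l + s / mu)" using h l0 assms(1) by simp
  also have "(l * mu) * (s / l - c / mu - a / l + s / mu) = mu * s - l * c - mu * a + l * s"
    using l0 assms(1) by (simp add: field_simps)
  finally have h2: "0 \<le> mu * s - l * c - mu * a + l * s" .
  have nd: "(norm (wl - wm))^2 = a + c - 2 * s"
    unfolding a_def c_def s_def power2_norm_eq_inner by (simp add: inner_diff_left inner_diff_right inner_commute)
  have "a + c - 2 * s \<le> a - c"
  proof (rule key_real[OF assms(1,2) h2])
    show "0 \<le> a + c - 2 * s" using nd by (metis zero_le_power2)
    assume "a + c - 2 * s = 0"
    then have "wl = wm" using nd by simp
    then show "a = c" unfolding a_def c_def by simp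
  qed
  then show ?thesis unfolding nd by (simp add: a_def c_def power2_norm_eq_inner)
qed

lemma loclip_isCont:
  assumes "locally_lipschitz B"
  shows "isCont B x"
proof -
  obtain e L where e: "e > 0" and L: "\<And>y z. y \<in> ball x e \<Longrightarrow> z \<in> ball x e \<Longrightarrow> dist (B y) (B z) \<le> L * dist y z"
    using assms unfolding locally_lipschitz_def by blast
  define K where "K = max L 0 + 1"
  have K: "K > 0" unfolding K_def by simp
  show ?thesis unfolding isCont_def LIM_def
  proof (intro allI impI)
    fix r :: real assume r: "r > 0"
    show "\<exists>s>0. \<forall>y. y \<noteq> x \<and> dist y x < s \<longrightarrow> dist (B y) (B x) < r"
    proof (intro exI[of _ "min e (r / K)"] conjI allI impI)
      show "0 < min e (r / K)" using e r K by simp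
      fix y assume y: "y \<noteq> x \<and> dist y x < min e (r / K)"
      then have yb: "y \<in> ball x e" by (simp add: dist_commute)
      have "dist (B y) (B x) \<le> L * dist y x" using L[OF yb] e by simp
      also have "\<dots> \<le> K * dist y x" unfolding K_def by (intro mult_right_mono) auto
      also have "\<dots> < K * (r / K)" using y K by (intro mult_strict_left_mono) auto
      also have "\<dots> = r" using K by simp
      finally show "dist (B y) (B x) < r" .
    qed
  qed
qed


theorem lemma3p2:
  fixes A :: "'a::{real_inner, complete_space} \<Rightarrow> 'a set"
    and B :: "'a \<Rightarrow> 'a"
    and \<delta> \<sigma> \<rho> lam_prev :: real
    and xk xk_prev :: 'a
  assumes "maximally_monotone A"
    and "locally_lipschitz B"
    and "0 < \<delta>" "\<delta> < 1"
    and "0 < \<sigma>" "\<sigma> < 1"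
    and "\<rho> \<in> {1, 1 / \<sigma>}"
    and "lam_prev > 0"
  shows "\<exists>i::nat.
    (let lam = \<rho> * lam_prev * \<sigma> ^ i;
         xnext = resolvent lam A (xk - lam *\<^sub>R B xk - lam_prev *\<^sub>R (B xk - B xk_prev))
     in lam * norm (B xnext - B xk) \<le> (\<delta> / 2) * norm (xnext - xk))"
proof -
  have rho: "\<rho> > 0" using assms(5,7) by auto
  define lamf where "lamf i = \<rho> * lam_prev * \<sigma> ^ i" for i :: nat
  have lampos: "lamf i > 0" for i unfolding lamf_def using rho assms(5,8) by simp
  have lamdec: "lamf j \<le> lamf i" if "i \<le> j" for i j
  proof -
    have "\<sigma> ^ j \<le> \<sigma> ^ i" using that assms(5,6) by (intro power_decreasing) auto
    then show ?thesis unfolding lamf_def using rho assms(8) by (intro mult_left_mono) auto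
  qed
  define arg where "arg i = xk - lamf i *\<^sub>R B xk - lam_prev *\<^sub>R (B xk - B xk_prev)" for i
  define P where "P i = resolvent (lamf i) A (arg i)" for i
  have "\<forall>i. \<exists>u\<in>A (P i). arg i = P i + lamf i *\<^sub>R u"
    using resolvent_char[OF assms(1) lampos] unfolding P_def by blast
  then obtain U where UA: "\<And>i. U i \<in> A (P i)" and Ueq: "\<And>i. arg i = P i + lamf i *\<^sub>R U i"
    by metis
  define z0 where "z0 = xk - lam_prev *\<^sub>R (B xk - B xk_prev)"
  define W where "W i = z0 - P i" for i
  have WU: "W i = lamf i *\<^sub>R (U i + B xk)" for i
  proof -
    have "P i = arg i - lamf i *\<^sub>R U i" using Ueq[of i] by simp
    then show ?thesis unfolding W_def z0_def arg_def by (simp add: algebra_simps)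
  qed
  have UW: "U i = (1 / lamf i) *\<^sub>R W i - B xk" for i
    using WU[of i] lampos[of i] by simp
  have mono: "inner (x - y) (u - v) \<ge> 0" if "u \<in> A x" "v \<in> A y" for x y u v
    using assms(1)[unfolded maximally_monotone_def, THEN conjunct1, unfolded monotone_op_def, rule_format, OF that] .
  have key: "(norm (W i - W j))^2 \<le> (norm (W i))^2 - (norm (W j))^2" if "i \<le> j" for i j
  proof (rule key_ineq[OF lampos[of j] lamdec[OF that]])
    have "0 \<le> inner (P i - P j) (U i - U j)" using mono[OF UA UA] .
    moreover have "P i - P j = W j - W i" unfolding W_def by simp
    moreover have "U i - U j = (1 / lamf i) *\<^sub>R W i - (1 / lamf j) *\<^sub>R W j" unfolding UW by simp
    ultimately show "0 \<le> inner (W j - W i) ((1 / lamf i) *\<^sub>R W i - (1 / lamf j) *\<^sub>R W j)" by simp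
  qed
  define Nn where "Nn i = (norm (W i))^2" for i
  have "antimono Nn"
  proof (rule antimonoI)
    fix i j :: nat assume "i \<le> j"
    from key[OF this] show "Nn j \<le> Nn i" unfolding Nn_def
      using zero_le_power2[of "norm (W i - W j)"] by linarith
  qed
  then obtain Lim where "Nn \<longlonglongrightarrow> Lim"
    using decseq_convergent[of Nn 0] unfolding Nn_def by auto
  then have "Cauchy Nn" using convergent_Cauchy convergent_def by blast
  have "Cauchy W"
  proof (rule metric_CauchyI)
    fix e :: real assume e: "e > 0"
    then obtain M where M: "\<And>m n. m \<ge> M \<Longrightarrow> n \<ge> M \<Longrightarrow> dist (Nn m) (Nn n) < e^2"
      using \<open>Cauchy Nn\<close> unfolding Cauchy_def by (meson zero_less_power)
    have aux: "dist (W m) (W n) < e" if "M \<le> m" "m \<le> n" for m n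
    proof -
      have "(norm (W m - W n))^2 \<le> Nn m - Nn n" using key[OF that(2)] unfolding Nn_def .
      also have "\<dots> \<le> dist (Nn m) (Nn n)" unfolding dist_real_def by simp
      also have "\<dots> < e^2" using M that by simp
      finally show ?thesis using e by (simp add: dist_norm power_less_imp_less_base)
    qed
    have "dist (W m) (W n) < e" if "M \<le> m" "M \<le> n" for m n
    proof (cases "m \<le> n")
      case True then show ?thesis using aux that by blast
    next
      case False then show ?thesis using aux[of n m] that by (simp add: dist_commute)
    qed
    then show "\<exists>M. \<forall>m\<ge>M. \<forall>n\<ge>M. dist (W m) (W n) < e" by blast
  qed
  then obtain ws where "W \<longlonglongrightarrow> ws" using Cauchy_convergent_iff convergent_def by blast
  then have Plim: "P \<longlonglongrightarrow> z0 - ws"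
  proof -
    have "(\<lambda>i. z0 - W i) \<longlonglongrightarrow> z0 - ws" by (intro tendsto_intros \<open>W \<longlonglongrightarrow> ws\<close>)
    moreover have "(\<lambda>i. z0 - W i) = P" unfolding W_def by auto
    ultimately show ?thesis by simp
  qed
  define ps where "ps = z0 - ws"
  have lam0: "lamf \<longlonglongrightarrow> 0"
  proof -
    have "(\<lambda>i. (\<rho> * lam_prev) * \<sigma> ^ i) \<longlonglongrightarrow> (\<rho> * lam_prev) * 0"
      using assms(5,6) by (intro tendsto_intros LIMSEQ_power_zero) auto
    then show ?thesis unfolding lamf_def by simp
  qed
  have BP: "(\<lambda>i. B (P i)) \<longlonglongrightarrow> B ps"
    unfolding ps_def by (rule isCont_tendsto_compose[OF loclip_isCont[OF assms(2)] Plim])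
  have g0: "(\<lambda>i. lamf i * norm (B (P i) - B xk)) \<longlonglongrightarrow> 0"
  proof -
    have "(\<lambda>i. lamf i * norm (B (P i) - B xk)) \<longlonglongrightarrow> 0 * norm (B ps - B xk)"
      by (intro tendsto_intros lam0 BP)
    then show ?thesis by simp
  qed
  have goal: "\<exists>i. lamf i * norm (B (P i) - B xk) \<le> \<delta> / 2 * norm (P i - xk)"
  proof (cases "ps = xk")
    case False
    have "(\<lambda>i. \<delta> / 2 * norm (P i - xk) - lamf i * norm (B (P i) - B xk))
        \<longlonglongrightarrow> \<delta> / 2 * norm (ps - xk) - 0"
      unfolding ps_def by (intro tendsto_intros Plim g0)
    moreover have "0 < \<delta> / 2 * norm (ps - xk) - 0" using False assms(3) by simp
    ultimately have "eventually (\<lambda>i. 0 < \<delta> / 2 * norm (P i - xk) - lamf i * norm (B (P i) - B xk)) sequentially"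
      by (rule order_tendstoD(1))
    then obtain N where "\<forall>n\<ge>N. 0 < \<delta> / 2 * norm (P n - xk) - lamf n * norm (B (P n) - B xk)"
      unfolding eventually_sequentially by blast
    then have "0 < \<delta> / 2 * norm (P N - xk) - lamf N * norm (B (P N) - B xk)" by blast
    then show ?thesis by (intro exI[of _ N]) linarith
  next
    case True
    obtain e L where e: "e > 0" and L: "\<And>y z. y \<in> ball xk e \<Longrightarrow> z \<in> ball xk e \<Longrightarrow> dist (B y) (B z) \<le> L * dist y z"
      using assms(2) unfolding locally_lipschitz_def by blast
    have ev1: "eventually (\<lambda>i. dist (P i) xk < e) sequentially"
      using tendstoD[OF Plim e] True unfolding ps_def by simp
    have "(\<lambda>i. lamf i * max L 0) \<longlonglongrightarrow> 0 * max L 0" by (intro tendsto_intros lam0)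
    then have ev2: "eventually (\<lambda>i. lamf i * max L 0 < \<delta> / 2) sequentially"
      using assms(3) by (intro order_tendstoD(2)) auto
    obtain N where N: "\<forall>n\<ge>N. dist (P n) xk < e \<and> lamf n * max L 0 < \<delta> / 2"
      using eventually_conj[OF ev1 ev2] unfolding eventually_sequentially by blast
    then have d: "dist (P N) xk < e" and l: "lamf N * max L 0 < \<delta> / 2" by auto
    have b1: "P N \<in> ball xk e" using d by (simp add: dist_commute)
    have b2: "xk \<in> ball xk e" using e by simp
    have "norm (B (P N) - B xk) \<le> L * norm (P N - xk)" using L[OF b1 b2] by (simp add: dist_norm)
    also have "\<dots> \<le> max L 0 * norm (P N - xk)" by (intro mult_right_mono) auto
    finally have "lamf N * norm (B (P N) - B xk) \<le> lamf N * (max L 0 * norm (P N - xk))"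
      using lampos[of N] by (intro mult_left_mono) auto
    also have "\<dots> = (lamf N * max L 0) * norm (P N - xk)" by simp
    also have "\<dots> \<le> \<delta> / 2 * norm (P N - xk)" using l by (intro mult_right_mono) auto
    finally show ?thesis by blast
  qed
  then show ?thesis unfolding Let_def lamf_def P_def arg_def .
qed

end
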